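(* Let $G$ be a countably infinite graph. If $G$ has pairwise disjoint ruling sets $F_n$ ($n\in\mathbb{N}$) satisfying $|F_n|\le\log_2 n$ for all sufficiently large $n$, then $G$ is not Ramsey-dense; that is, there is a 2-coloring of the edges of $K_\mathbb{N}$ in which every monochromatic copy of $G$ has upper density $0$.
   Context: A set $X\subseteq V(G)$ is ruling if $X$ is finite and all but finitely many vertices of $V(G)\setminus X$ have a neighbor in $X$. $K_{\mathbb{N}}$ is the complete graph on $\mathbb{N}$; a copy of $G$ is a subgraph isomorphic to $G$, monochromatic if all its edges have the same color. $\overline{d}(V)=\limsup_{t\to\infty}|V\cap\{1,\dots,t\}|/t$; $G$ is Ramsey-dense if every 2-coloring of $K_\mathbb{N}$ has a monochromatic copy of $G$ with positive upper density. *)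

theory Defs
  imports Complex_Main "HOL-Library.Extended_Real"
begin

definition is_graph :: "('a \<Rightarrow> 'a \<Rightarrow> bool) \<Rightarrow> bool" where
  "is_graph E \<longleftrightarrow> (\<forall>u v. E u v \<longrightarrow> E v u) \<and> (\<forall>v. \<not> E v v)"

definition ruling :: "('a \<Rightarrow> 'a \<Rightarrow> bool) \<Rightarrow> 'a set \<Rightarrow> bool" where
  "ruling E X \<longleftrightarrow> finite X \<and> finite {v. v \<notin> X \<and> \<not> (\<exists>x\<in>X. E v x)}"

definition upper_density :: "nat set \<Rightarrow> ereal" where
  "upper_density V = limsup (\<lambda>t. ereal (real (card (V \<inter> {1..t})) / real t))"

text \<open>A copy of G in K_N: an injective map of the vertices into N (the image of E is
  the edge set of the subgraph isomorphic to G). A 2-colouring of K_N is a map c from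
  2-element sets of naturals to bool; the copy is monochromatic if all its edges get one colour.\<close>
definition mono_copy :: "('a \<Rightarrow> 'a \<Rightarrow> bool) \<Rightarrow> (nat set \<Rightarrow> bool) \<Rightarrow> ('a \<Rightarrow> nat) \<Rightarrow> bool" where
  "mono_copy E c f \<longleftrightarrow> inj f \<and> (\<exists>b. \<forall>u v. E u v \<longrightarrow> c {f u, f v} = b)"

definition ramsey_dense :: "('a \<Rightarrow> 'a \<Rightarrow> bool) \<Rightarrow> bool" where
  "ramsey_dense E \<longleftrightarrow> (\<forall>c :: nat set \<Rightarrow> bool. \<exists>f. mono_copy E c f \<and> upper_density (range f) > 0)"

end

theory Submission
  imports Defs
begin

lemma flip_flip_nat: "flip_bit s (flip_bit s (x::nat)) = x"
  by (rule bit_eqI) (auto simp: bit_flip_bit_iff)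

lemma flip_lt: assumes "(x::nat) < 2^P" "s < P" shows "flip_bit s x < 2^P"
proof -
  have "take_bit P x = x" using assms(1) by (simp add: take_bit_nat_eq_self_iff)
  then have "take_bit P (flip_bit s x) = flip_bit s x"
    using assms(2) by (simp add: take_bit_flip_bit_eq)
  moreover have "take_bit P (flip_bit s x) < 2^P" by simp
  ultimately show ?thesis by simp
qed

lemma flip_half:
  fixes A :: "nat set"
  assumes "finite A" "\<And>x. x \<in> A \<Longrightarrow> flip_bit s x \<in> A"
  shows "2 * card {x\<in>A. bit x s = c} = card A"
proof -
  let ?A1 = "{x\<in>A. bit x s = c}" and ?A2 = "{x\<in>A. bit x s \<noteq> c}"
  have img: "flip_bit s ` ?A1 = ?A2"
  proof
    show "flip_bit s ` ?A1 \<subseteq> ?A2" using assms(2) by (auto simp: bit_flip_bit_iff)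
    show "?A2 \<subseteq> flip_bit s ` ?A1"
    proof
      fix x assume "x \<in> ?A2"
      then have "flip_bit s x \<in> ?A1" using assms(2) by (auto simp: bit_flip_bit_iff)
      then show "x \<in> flip_bit s ` ?A1" using flip_flip_nat by (metis image_eqI)
    qed
  qed
  have "inj_on (flip_bit s) ?A1" by (metis flip_flip_nat inj_onI)
  then have "card ?A2 = card ?A1" using img card_image by fastforce
  moreover have "card A = card ?A1 + card ?A2"
  proof -
    have "A = ?A1 \<union> ?A2" by auto
    moreover have "card (?A1 \<union> ?A2) = card ?A1 + card ?A2"
      by (rule card_Un_disjoint) (use assms(1) in auto)
    ultimately show ?thesis by simp
  qed
  ultimately show ?thesis by simp
qed

lemma flip_multi:
  fixes A :: "nat set"
  assumes "finite S" "finite A" "\<And>s x. s \<in> S \<Longrightarrow> x \<in> A \<Longrightarrow> flip_bit s x \<in> A"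
  shows "2 ^ card S * card {x\<in>A. \<forall>s\<in>S. bit x s = c} = card A"
  using assms
proof (induction S rule: finite_induct)
  case empty
  then show ?case by simp
next
  case (insert s S)
  let ?A' = "{x\<in>A. \<forall>s'\<in>S. bit x s' = c}"
  have IH: "2 ^ card S * card ?A' = card A" using insert by auto
  have cl: "flip_bit s x \<in> ?A'" if "x \<in> ?A'" for x
    using that insert by (auto simp: bit_flip_bit_iff)
  have eq: "{x\<in>A. \<forall>s'\<in>insert s S. bit x s' = c} = {x\<in>?A'. bit x s = c}" by auto
  have fin: "finite ?A'" using assms(2) by simp
  have h: "2 * card {x\<in>?A'. bit x s = c} = card ?A'"
    by (rule flip_half[OF fin cl])
  have "2 ^ card (insert s S) * card {x\<in>?A'. bit x s = c} = 2 ^ card S * (2 * card {x\<in>?A'. bit x s = c})"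
  proof -
    have "card (insert s S) = Suc (card S)" using insert(1,2) by simp
    then show ?thesis by (simp only: power_Suc mult.assoc)
  qed
  also have "\<dots> = card A" by (simp only: h IH)
  finally show ?case using eq by simp
qed

lemma periodic_count:
  fixes T :: "nat set"
  assumes "m > 0" "\<And>x. x \<in> T \<longleftrightarrow> x mod m \<in> T"
  shows "card (T \<inter> {..<q*m}) = q * card (T \<inter> {..<m})"
proof (induction q)
  case 0 then show ?case by simp
next
  case (Suc q)
  have split: "T \<inter> {..<Suc q*m} = (T \<inter> {..<q*m}) \<union> (T \<inter> {q*m..<q*m+m})" by auto
  have img: "T \<inter> {q*m..<q*m+m} = (\<lambda>x. x + q*m) ` (T \<inter> {..<m})"
  proof
    show "T \<inter> {q*m..<q*m+m} \<subseteq> (\<lambda>x. x + q*m) ` (T \<inter> {..<m})"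
    proof
      fix y assume y: "y \<in> T \<inter> {q*m..<q*m+m}"
      define x where "x = y - q*m"
      have x1: "x < m" using y unfolding x_def by auto
      have x2: "y = x + q*m" using y unfolding x_def by auto
      have "y mod m = x mod m" unfolding x2 by (rule mod_mult_self1)
      also have "\<dots> = x" using x1 by (rule mod_less)
      finally have "y mod m = x" .
      moreover have "y mod m \<in> T" using y assms(2) by blast
      ultimately have "x \<in> T" by simp
      then show "y \<in> (\<lambda>x. x + q*m) ` (T \<inter> {..<m})" using x1 x2 by blast
    qed
    show "(\<lambda>x. x + q*m) ` (T \<inter> {..<m}) \<subseteq> T \<inter> {q*m..<q*m+m}"
    proof
      fix y assume "y \<in> (\<lambda>x. x + q*m) ` (T \<inter> {..<m})"
      then obtain x where x: "x \<in> T" "x < m" "y = x + q*m" by auto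
      have "y mod m = x mod m" unfolding x(3) by (rule mod_mult_self1)
      also have "\<dots> = x" using x(2) by (rule mod_less)
      finally have "y mod m \<in> T" using x(1) by simp
      then have "y \<in> T" using assms(2) by blast
      then show "y \<in> T \<inter> {q*m..<q*m+m}" using x by auto
    qed
  qed
  have "card (T \<inter> {q*m..<q*m+m}) = card (T \<inter> {..<m})"
    unfolding img by (rule card_image) (simp add: inj_on_def)
  moreover have "card (T \<inter> {..<Suc q*m}) = card (T \<inter> {..<q*m}) + card (T \<inter> {q*m..<q*m+m})"
    unfolding split by (rule card_Un_disjoint) auto
  ultimately show ?case using Suc by simp
qed


lemma count_bound:
  fixes S :: "nat \<Rightarrow> nat set" and P N0 Mf :: nat and b :: bool
  assumes N0: "2 \<le> N0" "N0 \<le> Mf"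
  and Sfin: "\<And>n. N0 \<le> n \<Longrightarrow> n < Mf \<Longrightarrow> finite (S n)"
  and Sub: "\<And>n s. N0 \<le> n \<Longrightarrow> n < Mf \<Longrightarrow> s \<in> S n \<Longrightarrow> s < P"
  and Scard: "\<And>n. N0 \<le> n \<Longrightarrow> n < Mf \<Longrightarrow> 2 ^ card (S n) \<le> n"
  and Sdisj: "\<And>m n. m \<noteq> n \<Longrightarrow> S m \<inter> S n = {}"
  shows "real (card {x\<in>{..<(2::nat)^P}. \<forall>n\<in>{N0..<Mf}. \<exists>s\<in>S n. bit x s = b}) * (real Mf - 1)
          \<le> 2^P * (real N0 - 1)"
proof -
  define T where "T M = {x\<in>{..<(2::nat)^P}. \<forall>n\<in>{N0..<M}. \<exists>s\<in>S n. bit x s = b}" for M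
  have main: "M \<le> Mf \<Longrightarrow> real (card (T M)) * (real M - 1) \<le> 2^P * (real N0 - 1)"
    if "N0 \<le> M" for M
    using that
  proof (induction M rule: dec_induct)
    case base
    have "T N0 = {..<2^P}" unfolding T_def by auto
    then show ?case by simp
  next
    case (step n)
    have nMf: "n < Mf" using step by simp
    define Bd where "Bd = {x\<in>T n. \<forall>s\<in>S n. bit x s = (\<not> b)}"
    have finT: "finite (T n)" unfolding T_def by simp
    have TS: "T (Suc n) = T n - Bd"
    proof -
      have iv: "{N0..<Suc n} = insert n {N0..<n}" using step(1) by auto
      show ?thesis unfolding T_def Bd_def iv by auto
    qed
    have cl: "flip_bit s x \<in> T n" if "s \<in> S n" "x \<in> T n" for s x
    proof -
      have sP: "s < P" using Sub[OF step(1) nMf that(1)] .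
      have x1: "x < 2^P" and x2: "\<forall>m\<in>{N0..<n}. \<exists>s'\<in>S m. bit x s' = b"
        using that(2) unfolding T_def by auto
      have "flip_bit s x < 2^P" using flip_lt[OF x1 sP] .
      moreover have "\<forall>m\<in>{N0..<n}. \<exists>s'\<in>S m. bit (flip_bit s x) s' = b"
      proof
        fix m assume m: "m \<in> {N0..<n}"
        then obtain s' where s': "s' \<in> S m" "bit x s' = b" using x2 by blast
        have "m \<noteq> n" using m by auto
        then have "s' \<noteq> s" using Sdisj[of m n] s'(1) that(1) by blast
        then have "bit (flip_bit s x) s' = b" using s'(2) by (simp add: bit_flip_bit_iff)
        then show "\<exists>s'\<in>S m. bit (flip_bit s x) s' = b" using s'(1) by blast
      qed
      ultimately show ?thesis unfolding T_def by simp
    qed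
    have fm: "2 ^ card (S n) * card Bd = card (T n)"
      unfolding Bd_def by (rule flip_multi[OF Sfin[OF step(1) nMf] finT cl])
    have sub: "Bd \<subseteq> T n" unfolding Bd_def by auto
    have cT: "card (T (Suc n)) = card (T n) - card Bd"
      unfolding TS using card_Diff_subset[OF finite_subset[OF sub finT] sub] .
    have dle: "card Bd \<le> card (T n)" using card_mono[OF finT sub] .
    have kn: "2 ^ card (S n) \<le> n" using Scard[OF step(1) nMf] .
    have cn: "card (T n) \<le> n * card Bd" using fm kn
      by (metis mult_le_mono1)
    have "real (card (T (Suc n))) * (real (Suc n) - 1) = (real (card (T n)) - real (card Bd)) * real n"
      using cT dle by (simp add: of_nat_diff)
    also have "\<dots> \<le> real (card (T n)) * (real n - 1)"
    proof -
      have "real (card (T n)) \<le> real n * real (card Bd)" using cn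
        by (metis of_nat_le_iff of_nat_mult)
      then show ?thesis by (simp add: algebra_simps)
    qed
    also have "\<dots> \<le> 2^P * (real N0 - 1)" using step by simp
    finally show ?case .
  qed
  show ?thesis using main[OF N0(2) order_refl] unfolding T_def .
qed


lemma arith_aux:
  fixes X B K Q e :: real
  assumes "X \<le> B + K + Q" "3 * Q \<le> e" "3 * (B + K) < e" "0 \<le> e"
  shows "X < e"
  using assms by (smt (verit))

definition col :: "nat set \<Rightarrow> bool" where "col A = bit (Max A) (Min A)"

lemma eps_bound:
  fixes E :: "'a \<Rightarrow> 'a \<Rightarrow> bool" and F :: "nat \<Rightarrow> 'a set" and f :: "'a \<Rightarrow> nat"
  assumes graph: "is_graph E"
    and rul: "\<And>n. ruling E (F n)"
    and disj: "\<And>m n. m \<noteq> n \<Longrightarrow> F m \<inter> F n = {}"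
    and N0: "2 \<le> N0" and Fcard: "\<And>n. N0 \<le> n \<Longrightarrow> 2 ^ card (F n) \<le> n"
    and injf: "inj f" and mono: "\<And>u v. E u v \<Longrightarrow> col {f u, f v} = b"
    and eps: "\<epsilon> > 0"
  shows "\<exists>T0. \<forall>t\<ge>T0. real (card (range f \<inter> {1..t})) < \<epsilon> * real t"
proof -
  obtain Mf :: nat where Mf: "real N0 + 3 * real N0 / \<epsilon> < real Mf"
    using reals_Archimedean2 by blast
  have N0Mf: "N0 \<le> Mf" using Mf eps
    by (smt (verit, best) divide_nonneg_pos of_nat_0_le_iff of_nat_le_iff)
  have Mf1: "real Mf - 1 > 0" using N0Mf N0 by simp
  have epsM: "3 * (real N0 - 1) \<le> \<epsilon> * (real Mf - 1)"
  proof -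
    have "3 * real N0 / \<epsilon> < real Mf - 1" using Mf N0 by simp
    then have "3 * real N0 < \<epsilon> * (real Mf - 1)" using eps by (simp add: field_simps)
    then show ?thesis by simp
  qed
  define S where "S n = f ` F n" for n
  define U where "U = (\<Union>n\<in>{N0..<Mf}. S n)"
  have finF: "finite (F n)" for n using rul[of n] unfolding ruling_def by simp
  have finU: "finite U" unfolding U_def S_def using finF by auto
  define P where "P = Suc (Max (insert 0 U))"
  have UP: "s < P" if "s \<in> U" for s
    unfolding P_def using finU that by (simp add: le_imp_less_Suc)
  have injon: "inj_on f A" for A using injf by (simp add: inj_on_def inj_def)
  have Scard: "card (S n) = card (F n)" for n unfolding S_def using card_image[OF injon] .
  define Tf :: "nat set" where "Tf = {x. \<forall>n\<in>{N0..<Mf}. \<exists>s\<in>S n. bit x s = b}"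
  define m :: nat where "m = 2^P"
  have m0: "m > 0" unfolding m_def by simp
  define K where "K = card (Tf \<inter> {..<m})"
  have Kb: "real K * (real Mf - 1) \<le> 2^P * (real N0 - 1)"
  proof -
    have "real (card {x\<in>{..<(2::nat)^P}. \<forall>n\<in>{N0..<Mf}. \<exists>s\<in>S n. bit x s = b}) * (real Mf - 1)
          \<le> 2^P * (real N0 - 1)"
    proof (rule count_bound[OF N0 N0Mf])
      show "finite (S n)" for n unfolding S_def using finF by simp
      show "s < P" if "N0 \<le> n" "n < Mf" "s \<in> S n" for n s
        by (rule UP) (use that in \<open>auto simp: U_def\<close>)
      show "2 ^ card (S n) \<le> n" if "N0 \<le> n" "n < Mf" for n
        using Fcard that Scard by simp
      show "S m \<inter> S n = {}" if "m \<noteq> n" for m n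
        unfolding S_def using disj[OF that] image_Int[OF injf] by (metis image_empty)
    qed
    moreover have "{x\<in>{..<(2::nat)^P}. \<forall>n\<in>{N0..<Mf}. \<exists>s\<in>S n. bit x s = b} = Tf \<inter> {..<m}"
      unfolding Tf_def m_def by auto
    ultimately show ?thesis unfolding K_def by simp
  qed
  have K3: "3 * real K \<le> \<epsilon> * real m"
  proof -
    have "3 * real K * (real Mf - 1) \<le> 3 * (2^P * (real N0 - 1))" using Kb by simp
    also have "\<dots> = 2^P * (3 * (real N0 - 1))" by simp
    also have "\<dots> \<le> 2^P * (\<epsilon> * (real Mf - 1))" using epsM by simp
    also have "\<dots> = (\<epsilon> * real m) * (real Mf - 1)" unfolding m_def by simp
    finally show ?thesis using Mf1 by simp
  qed
  have per: "x \<in> Tf \<longleftrightarrow> x mod m \<in> Tf" for x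
  proof -
    have h: "bit (x mod m) s = bit x s" if "s \<in> U" for s
      using UP[OF that] unfolding m_def by (simp add: bit_take_bit_iff flip: take_bit_eq_mod)
    show ?thesis
    proof
      assume a: "x \<in> Tf"
      show "x mod m \<in> Tf" unfolding Tf_def mem_Collect_eq
      proof
        fix n assume n: "n \<in> {N0..<Mf}"
        have "\<exists>s\<in>S n. bit x s = b" using a n unfolding Tf_def mem_Collect_eq by (rule bspec)
        then obtain s where s: "s \<in> S n" "bit x s = b" by blast
        have "s \<in> U" using s(1) n unfolding U_def by blast
        then have "bit (x mod m) s = bit x s" by (rule h)
        then have "bit (x mod m) s = b" using s(2) by (rule trans)
        then show "\<exists>s\<in>S n. bit (x mod m) s = b" by (rule bexI[OF _ s(1)])
      qed
    next
      assume a: "x mod m \<in> Tf"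
      show "x \<in> Tf" unfolding Tf_def mem_Collect_eq
      proof
        fix n assume n: "n \<in> {N0..<Mf}"
        have "\<exists>s\<in>S n. bit (x mod m) s = b" using a n unfolding Tf_def mem_Collect_eq by (rule bspec)
        then obtain s where s: "s \<in> S n" "bit (x mod m) s = b" by blast
        have "s \<in> U" using s(1) n unfolding U_def by blast
        then have "bit (x mod m) s = bit x s" by (rule h)
        from this[symmetric] s(2) have "bit x s = b" by (rule trans)
        then show "\<exists>s\<in>S n. bit x s = b" by (rule bexI[OF _ s(1)])
      qed
    qed
  qed
  define Bad where "Bad = f ` (\<Union>n\<in>{N0..<Mf}. F n \<union> {v. v \<notin> F n \<and> \<not> (\<exists>x\<in>F n. E v x)}) \<union> {..<P}"
  have finBad: "finite Bad" unfolding Bad_def using finF rul unfolding ruling_def by auto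
  have cover: "range f \<subseteq> Bad \<union> Tf"
  proof
    fix y assume "y \<in> range f"
    then obtain v where v: "y = f v" by auto
    show "y \<in> Bad \<union> Tf"
    proof (cases "y \<in> Bad")
      case True then show ?thesis by simp
    next
      case False
      then have yP: "P \<le> f v" and good: "\<forall>n\<in>{N0..<Mf}. v \<notin> F n \<and> (\<exists>x\<in>F n. E v x)"
        unfolding Bad_def v by auto
      have "\<exists>s\<in>S n. bit (f v) s = b" if n: "n \<in> {N0..<Mf}" for n
      proof -
        obtain u where u: "u \<in> F n" "E v u" using good n by blast
        have fuU: "f u \<in> U" unfolding U_def S_def using u(1) n by blast
        have lt: "f u < f v" using UP[OF fuU] yP by simp
        have "col {f v, f u} = b" using mono[OF u(2)] .
        moreover have "Max {f v, f u} = f v" "Min {f v, f u} = f u" using lt by auto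
        ultimately have "bit (f v) (f u) = b" unfolding col_def by simp
        then show ?thesis using u(1) unfolding S_def by blast
      qed
      then show ?thesis unfolding Tf_def v by blast
    qed
  qed
  define T0 :: nat where "T0 = nat \<lceil>3 * (real (card Bad) + real K) / \<epsilon>\<rceil> + 1"
  have "real (card (range f \<inter> {1..t})) < \<epsilon> * real t" if t: "t \<ge> T0" for t
  proof -
    define q where "q = t div m"
    have qm: "q * m \<le> t" unfolding q_def by simp
    have tlt: "t < (q + 1) * m"
    proof -
      have e1: "q * m + t mod m = t" unfolding q_def by (rule div_mult_mod_eq)
      have e2: "t mod m < m" using m0 by (rule mod_less_divisor)
      have e3: "(q + 1) * m = q * m + m" by simp
      show ?thesis using e1 e2 e3 by linarith
    qed
    have "range f \<inter> {1..t} \<subseteq> Bad \<union> (Tf \<inter> {..<(q+1)*m})"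
    proof
      fix y assume y: "y \<in> range f \<inter> {1..t}"
      then have "y \<in> Bad \<union> Tf" using cover by blast
      moreover have "y < (q+1)*m" using y tlt by simp
      ultimately show "y \<in> Bad \<union> (Tf \<inter> {..<(q+1)*m})" by blast
    qed
    then have "card (range f \<inter> {1..t}) \<le> card (Bad \<union> (Tf \<inter> {..<(q+1)*m}))"
      by (rule card_mono[rotated]) (use finBad in simp)
    also have "\<dots> \<le> card Bad + card (Tf \<inter> {..<(q+1)*m})" by (rule card_Un_le)
    also have "card (Tf \<inter> {..<(q+1)*m}) = (q+1) * K"
      unfolding K_def by (rule periodic_count[OF m0 per])
    finally have c0: "card (range f \<inter> {1..t}) \<le> card Bad + (q+1) * K" .
    have c1: "real (card (range f \<inter> {1..t})) \<le> real (card Bad) + real K + real q * real K"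
    proof -
      have "real (card (range f \<inter> {1..t})) \<le> real (card Bad + (q+1) * K)"
        using c0 by (rule of_nat_mono)
      also have "\<dots> = real (card Bad) + real K + real q * real K" by (simp add: algebra_simps)
      finally show ?thesis .
    qed
    have "3 * (real q * real K) \<le> real q * (\<epsilon> * real m)" using K3
      by (metis mult.left_commute mult_left_mono of_nat_0_le_iff)
    also have "\<dots> = \<epsilon> * real (q * m)" by simp
    also have "\<dots> \<le> \<epsilon> * real t"
      using mult_left_mono[OF of_nat_mono[OF qm], of \<epsilon>] eps by simp
    finally have c2: "3 * (real q * real K) \<le> \<epsilon> * real t" .
    have "3 * (real (card Bad) + real K) / \<epsilon> < real t"
    proof -
      have "3 * (real (card Bad) + real K) / \<epsilon> \<le> real (nat \<lceil>3 * (real (card Bad) + real K) / \<epsilon>\<rceil>)"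
        by linarith
      also have "\<dots> < real T0" unfolding T0_def by simp
      also have "\<dots> \<le> real t" using t by simp
      finally show ?thesis .
    qed
    then have c3: "3 * (real (card Bad) + real K) < \<epsilon> * real t" using eps
      by (simp add: field_simps)
    have c4: "0 \<le> \<epsilon> * real t" using eps by simp
    show ?thesis by (rule arith_aux[OF c1 c2 c3 c4])
  qed
  then show ?thesis by blast
qed


theorem mainTheorem9:
  fixes E :: "'a \<Rightarrow> 'a \<Rightarrow> bool" and F :: "nat \<Rightarrow> 'a set"
  assumes "countable (UNIV :: 'a set)" and "infinite (UNIV :: 'a set)"
    and "is_graph E"
    and "\<And>n. ruling E (F n)"
    and "\<And>m n. m \<noteq> n \<Longrightarrow> F m \<inter> F n = {}"
    and "\<forall>\<^sub>F n in sequentially. real (card (F n)) \<le> log 2 (real n)"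
  shows "\<not> ramsey_dense E \<and>
    (\<exists>c :: nat set \<Rightarrow> bool. \<forall>f. mono_copy E c f \<longrightarrow> upper_density (range f) = 0)"
proof -
  have dens0: "upper_density (range f) = 0" if mc: "mono_copy E col f" for f
  proof -
    from mc obtain b where injf: "inj f" and mono: "\<forall>u v. E u v \<longrightarrow> col {f u, f v} = b"
      unfolding mono_copy_def by blast
    obtain N1 where N1: "\<forall>n\<ge>N1. real (card (F n)) \<le> log 2 (real n)"
      using assms(6) unfolding eventually_sequentially by blast
    define N0 where "N0 = max N1 2"
    have N02: "2 \<le> N0" unfolding N0_def by simp
    have Fc: "2 ^ card (F n) \<le> n" if "N0 \<le> n" for n
    proof -
      have n0: "real n > 0" using that N0_def by simp
      have "real (card (F n)) \<le> log 2 (real n)" using N1 that N0_def by simp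
      then have "2 powr real (card (F n)) \<le> real n" using le_log_iff[of 2 "real n"] n0 by simp
      then have "real (2 ^ card (F n)) \<le> real n" by (simp add: powr_realpow)
      then show ?thesis by (simp only: of_nat_le_iff)
    qed
    have lim: "(\<lambda>t. real (card (range f \<inter> {1..t})) / real t) \<longlonglongrightarrow> 0"
    proof (rule LIMSEQ_I)
      fix r :: real assume r: "0 < r"
      obtain T0 where T0: "\<forall>t\<ge>T0. real (card (range f \<inter> {1..t})) < r * real t"
        using eps_bound[OF assms(3) assms(4) assms(5) N02 Fc injf _ r] mono by blast
      show "\<exists>no. \<forall>n\<ge>no. norm (real (card (range f \<inter> {1..n})) / real n - 0) < r"
      proof (intro exI allI impI)
        fix n assume n: "Suc T0 \<le> n"
        then have npos: "real n > 0" by simp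
        have "real (card (range f \<inter> {1..n})) < r * real n" using T0 n by simp
        then have "real (card (range f \<inter> {1..n})) / real n < r" using npos
          by (simp add: divide_less_eq)
        then show "norm (real (card (range f \<inter> {1..n})) / real n - 0) < r" by simp
      qed
    qed
    then have "(\<lambda>t. ereal (real (card (range f \<inter> {1..t})) / real t)) \<longlonglongrightarrow> ereal 0"
      by (rule tendsto_ereal)
    then have "limsup (\<lambda>t. ereal (real (card (range f \<inter> {1..t})) / real t)) = ereal 0"
      by (rule lim_imp_Limsup[OF trivial_limit_sequentially])
    then show ?thesis unfolding upper_density_def by (simp add: zero_ereal_def)
  qed
  show ?thesis
  proof
    show "\<not> ramsey_dense E"
    proof
      assume "ramsey_dense E"
      then obtain f where "mono_copy E col f" "upper_density (range f) > 0"
        unfolding ramsey_dense_def by blast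
      with dens0 show False by simp
    qed
    show "\<exists>c :: nat set \<Rightarrow> bool. \<forall>f. mono_copy E c f \<longrightarrow> upper_density (range f) = 0"
      using dens0 by blast
  qed
qed

end
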